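(* Let $d\ge2$. The objects $\hat P_\emptyset$ and $\hat P_{\mathbb{Z}_d}$ are zero objects in $\mathrm{HMF}^{\mathrm{gr}}_{\mathrm{bi}}$. For nonempty proper subsets $R,S\subset\mathbb{Z}_d$ one has $\mathrm{HMF}^{\mathrm{gr}}_{\mathrm{bi}}(\hat P_R,\hat P_S)=\mathrm{ZMF}^{\mathrm{gr}}_{\mathrm{bi}}(\hat P_R,\hat P_S)$.
   Context: Let $\eta=e^{2\pi i/d}$. Graded matrix bifactorisations of $x^d$: $\mathbb{Z}_2$-graded free $\mathbb{C}[x,y]$-modules $M$ with a $\mathbb{C}$-grading compatible with the module structure ($x,y$ of degree $2/d$) and an odd $\mathbb{C}[x,y]$-linear $d^M$ of $\mathbb{C}$-degree $1$ with $d^M\circ d^M=(x^d-y^d)1_M$. $\mathrm{ZMF}^{\mathrm{gr}}_{\mathrm{bi}}(M,N)$: even $\mathbb{C}[x,y]$-linear maps $f$ of $\mathbb{C}$-degree $0$ with $d^Nf=fd^M$. $\mathrm{HMF}^{\mathrm{gr}}_{\mathrm{bi}}(M,N)$: the quotient of $\mathrm{ZMF}^{\mathrm{gr}}_{\mathrm{bi}}(M,N)$ by maps $d^Ng+gd^M$ with $g$ odd $\mathbb{C}[x,y]$-linear of $\mathbb{C}$-degree $-1$. For $S\subset\mathbb{Z}_d$, $\alpha\in\mathbb{C}$, $P_S\{\alpha\}$ has even part $\mathbb{C}[x,y]$ with $1$ in degree $\alpha$, odd part $\mathbb{C}[x,y]$ with $1$ in degree $\alpha+\frac2d|S|-1$,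 $d_1=\prod_{j\in S}(x-\eta^jy)$ (odd to even), $d_0=\prod_{j\notin S}(x-\eta^jy)$ (even to odd); $\hat P_S:=P_S\{\frac{1-|S|}{d}\}$. *)

theory Defs
  imports Complex_Main "HOL-Computational_Algebra.Polynomial"
begin

text \<open>Bivariate polynomials C[x,y] are represented as polynomials in y with
coefficients in C[x].\<close>
type_synonym bpoly = "complex poly poly"

definition bX :: bpoly where "bX = [:[:0, 1:]:]"
definition bY :: bpoly where "bY = [:0, 1:]"
definition bconst :: "complex \<Rightarrow> bpoly" where "bconst c = [:[:c:]:]"

definition homog :: "nat \<Rightarrow> bpoly \<Rightarrow> bool" where
  "homog n p \<longleftrightarrow> (\<forall>i j. coeff (coeff p j) i \<noteq> 0 \<longrightarrow> i + j = n)"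

definition hdeg :: "nat \<Rightarrow> bpoly \<Rightarrow> complex \<Rightarrow> bool" where
  "hdeg d p \<delta> \<longleftrightarrow> p = 0 \<or> (\<exists>n. homog n p \<and> 2 * of_nat n / of_nat d = \<delta>)"

text \<open>Matrices (row = target basis index, column = source basis index), zero
outside the range.  A C[x,y]-linear map of C-degree k from a graded free module
with basis degrees g (m basis elements) to one with basis degrees h (n elements).\<close>
type_synonym bmat = "nat \<Rightarrow> nat \<Rightarrow> bpoly"

definition is_hmat :: "nat \<Rightarrow> complex \<Rightarrow> nat \<Rightarrow> (nat \<Rightarrow> complex) \<Rightarrow> nat \<Rightarrow> (nat \<Rightarrow> complex) \<Rightarrow> bmat \<Rightarrow> bool" where
  "is_hmat d k m g n h F \<longleftrightarrow>
     (\<forall>i j. (n \<le> i \<or> m \<le> j) \<longrightarrow> F i j = 0) \<and>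
     (\<forall>i<n. \<forall>j<m. hdeg d (F i j) (g j + k - h i))"

definition mmul :: "nat \<Rightarrow> bmat \<Rightarrow> bmat \<Rightarrow> bmat" where
  "mmul l A B = (\<lambda>i j. \<Sum>t<l. A i t * B t j)"

definition madd :: "bmat \<Rightarrow> bmat \<Rightarrow> bmat" where
  "madd A B = (\<lambda>i j. A i j + B i j)"

definition msub :: "bmat \<Rightarrow> bmat \<Rightarrow> bmat" where
  "msub A B = (\<lambda>i j. A i j - B i j)"

definition sid :: "nat \<Rightarrow> bpoly \<Rightarrow> bmat" where
  "sid n c = (\<lambda>i j. if i = j \<and> i < n then c else 0)"

text \<open>A graded free Z2-graded module of finite rank: even basis of rank rk0 with
degrees deg0, odd basis of rank rk1 with degrees deg1; dd1 : odd \<rightarrow> even,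
dd0 : even \<rightarrow> odd.\<close>
record gmf =
  rk0 :: nat
  rk1 :: nat
  deg0 :: "nat \<Rightarrow> complex"
  deg1 :: "nat \<Rightarrow> complex"
  dd1 :: bmat
  dd0 :: bmat

definition is_gmf :: "nat \<Rightarrow> gmf \<Rightarrow> bool" where
  "is_gmf d M \<longleftrightarrow>
     is_hmat d 1 (rk1 M) (deg1 M) (rk0 M) (deg0 M) (dd1 M) \<and>
     is_hmat d 1 (rk0 M) (deg0 M) (rk1 M) (deg1 M) (dd0 M) \<and>
     mmul (rk1 M) (dd1 M) (dd0 M) = sid (rk0 M) (bX ^ d - bY ^ d) \<and>
     mmul (rk0 M) (dd0 M) (dd1 M) = sid (rk1 M) (bX ^ d - bY ^ d)"

definition ZMF :: "nat \<Rightarrow> gmf \<Rightarrow> gmf \<Rightarrow> (bmat \<times> bmat) set" where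
  "ZMF d M N = {(F0, F1).
     is_hmat d 0 (rk0 M) (deg0 M) (rk0 N) (deg0 N) F0 \<and>
     is_hmat d 0 (rk1 M) (deg1 M) (rk1 N) (deg1 N) F1 \<and>
     mmul (rk1 N) (dd1 N) F1 = mmul (rk0 M) F0 (dd1 M) \<and>
     mmul (rk0 N) (dd0 N) F0 = mmul (rk1 M) F1 (dd0 M)}"

definition nullhtp :: "nat \<Rightarrow> gmf \<Rightarrow> gmf \<Rightarrow> bmat \<times> bmat \<Rightarrow> bool" where
  "nullhtp d M N F \<longleftrightarrow> (\<exists>G0 G1.
     is_hmat d (-1) (rk0 M) (deg0 M) (rk1 N) (deg1 N) G0 \<and>
     is_hmat d (-1) (rk1 M) (deg1 M) (rk0 N) (deg0 N) G1 \<and>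
     fst F = madd (mmul (rk1 N) (dd1 N) G0) (mmul (rk1 M) G1 (dd0 M)) \<and>
     snd F = madd (mmul (rk0 N) (dd0 N) G1) (mmul (rk0 M) G0 (dd1 M)))"

definition HMF :: "nat \<Rightarrow> gmf \<Rightarrow> gmf \<Rightarrow> (bmat \<times> bmat) set set" where
  "HMF d M N = ZMF d M N // {(f, g). f \<in> ZMF d M N \<and> g \<in> ZMF d M N \<and>
      nullhtp d M N (msub (fst f) (fst g), msub (snd f) (snd g))}"

definition eta :: "nat \<Rightarrow> complex" where "eta d = exp (2 * pi * \<i> / of_nat d)"

text \<open>P_S{alpha}; subsets of Z_d are subsets of {..<d}.\<close>
definition P :: "nat \<Rightarrow> nat set \<Rightarrow> complex \<Rightarrow> gmf" where
  "P d S \<alpha> = \<lparr> rk0 = 1, rk1 = 1, deg0 = (\<lambda>_. \<alpha>),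
     deg1 = (\<lambda>_. \<alpha> + 2 * of_nat (card S) / of_nat d - 1),
     dd1 = (\<lambda>i j. if i = 0 \<and> j = 0 then (\<Prod>t\<in>S. bX - bconst (eta d ^ t) * bY) else 0),
     dd0 = (\<lambda>i j. if i = 0 \<and> j = 0 then (\<Prod>t\<in>{..<d} - S. bX - bconst (eta d ^ t) * bY) else 0) \<rparr>"

definition Phat :: "nat \<Rightarrow> nat set \<Rightarrow> gmf" where
  "Phat d S = P d S ((1 - of_nat (card S)) / of_nat d)"

definition is_zero_obj :: "nat \<Rightarrow> gmf \<Rightarrow> bool" where
  "is_zero_obj d Z \<longleftrightarrow> is_gmf d Z \<and>
     (\<forall>M. is_gmf d M \<longrightarrow> (\<exists>C. HMF d Z M = {C}) \<and> (\<exists>C. HMF d M Z = {C}))"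

end

theory Submission
  imports Defs "HOL-Computational_Algebra.Computational_Algebra"
begin


lemma eta_pow: "d > 0 \<Longrightarrow> eta d ^ k = cis (2 * pi * real k / real d)"
  unfolding eta_def cis_conv_exp
  by (simp add: exp_of_nat_mult[symmetric] mult_ac)

lemma roots_prod:
  assumes d: "d > 0"
  shows "(\<Prod>k<d. [:-(eta d ^ k), 1:]) = (monom 1 d - 1 :: complex poly)"
proof -
  define p :: "complex poly" where "p = monom 1 d - 1"
  have pz: "poly p z = z^d - 1" for z by (simp add: p_def poly_monom)
  have dp: "poly (pderiv p) z = of_nat d * z^(d-1)" for z
    by (simp add: p_def pderiv_diff pderiv_monom poly_monom)
  have rsq: "rsquarefree p"
    unfolding rsquarefree_roots
  proof (intro allI notI)
    fix a assume "poly p a = 0 \<and> poly (pderiv p) a = 0"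
    then have "a^d = 1" "of_nat d * a^(d-1) = 0" using pz dp by auto
    then show False using d by (auto simp: power_0_left split: if_splits)
  qed
  have c: "coeff p n = (if n = d then 1 else if n = 0 then -1 else 0)" for n
    using d by (auto simp: p_def coeff_monom)
  have "degree p = d"
  proof (rule antisym)
    show "degree p \<le> d" by (rule degree_le) (auto simp: c)
    show "d \<le> degree p" by (rule le_degree) (simp add: c)
  qed
  then have lc: "lead_coeff p = 1" by (simp add: c)
  have "p = smult (lead_coeff p) (\<Prod>z|poly p z = 0. [:-z, 1:])"
    using complex_poly_decompose_rsquarefree[OF rsq] by simp
  also have "\<dots> = (\<Prod>z|z^d = 1. [:-z, 1:])" using lc pz by simp
  also have "\<dots> = (\<Prod>k<d. [:-cis (2 * pi * real k / real d), 1:])"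
    by (rule prod.reindex_bij_betw[OF bij_betw_roots_unity[OF d], symmetric])
  also have "\<dots> = (\<Prod>k<d. [:-(eta d ^ k), 1:])" using eta_pow[OF d] by simp
  finally show ?thesis by (simp add: p_def)
qed

lemma roots_prod_pt:
  assumes d: "d > 0"
  shows "(\<Prod>k<d. z - eta d ^ k) = z^d - 1"
  using arg_cong[OF roots_prod[OF d], of "\<lambda>p. poly p z"]
  by (simp add: poly_prod poly_monom)

lemma roots_prod_pt2:
  assumes d: "d > 0"
  shows "(\<Prod>k<d. a - eta d ^ k * b) = a^d - b^d"
proof (cases "b = 0")
  case True then show ?thesis using d by (simp add: power_0_left)
next
  case False
  have "(\<Prod>k<d. a - eta d ^ k * b) = (\<Prod>k<d. b * (a/b - eta d ^ k))"
    using False by (intro prod.cong) (auto simp: field_simps)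
  also have "\<dots> = b^d * (\<Prod>k<d. (a/b - eta d ^ k))" by (simp add: prod.distrib)
  also have "\<dots> = b^d * ((a/b)^d - 1)" using roots_prod_pt[OF d] by simp
  also have "\<dots> = a^d - b^d" using False by (simp add: field_simps power_divide)
  finally show ?thesis .
qed

definition ev :: "complex \<Rightarrow> complex \<Rightarrow> bpoly \<Rightarrow> complex" where
  "ev a b Q = poly (poly Q [:b:]) a"

lemma ev_map: "ev a b Q = poly (map_poly (\<lambda>c. poly c a) Q) b"
  unfolding ev_def by (induction Q) (auto simp: map_poly_pCons)

lemma ev_zero: assumes "\<And>a b. ev a b Q = 0" shows "Q = 0"
proof -
  have "map_poly (\<lambda>c. poly c a) Q = 0" for a
  proof -
    have "\<forall>b. poly (map_poly (\<lambda>c. poly c a) Q) b = 0" using assms ev_map by metis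
    then show ?thesis using poly_all_0_iff_0 by blast
  qed
  then have "poly (coeff Q j) a = 0" for a j
    by (metis coeff_0 coeff_map_poly poly_0)
  then have "coeff Q j = 0" for j using poly_all_0_iff_0 by blast
  then show ?thesis by (simp add: poly_eq_iff)
qed

lemma bprod:
  assumes d: "d > 0"
  shows "(\<Prod>t\<in>{..<d}. bX - bconst (eta d ^ t) * bY) = bX ^ d - bY ^ d"
proof -
  have "ev a b ((\<Prod>t\<in>{..<d}. bX - bconst (eta d ^ t) * bY) - (bX ^ d - bY ^ d)) = 0" for a b
    using roots_prod_pt2[OF d, of a b]
    by (simp add: ev_def poly_prod bX_def bY_def bconst_def)
  from ev_zero[OF this] show ?thesis by simp
qed



definition E :: bmat where "E = (\<lambda>i j. if i = 0 \<and> j = 0 then 1 else 0)"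

lemma mmul1: "mmul 1 A B = (\<lambda>i j. A i 0 * B 0 j)"
  by (simp add: mmul_def fun_eq_iff)

lemma mmul1S: "mmul (Suc 0) A B = (\<lambda>i j. A i 0 * B 0 j)"
  by (simp add: mmul_def fun_eq_iff)

lemma mmul_msub_right: "mmul l A (msub B C) = msub (mmul l A B) (mmul l A C)"
  by (simp add: mmul_def msub_def fun_eq_iff algebra_simps sum_subtractf)

lemma mmul_msub_left: "mmul l (msub B C) A = msub (mmul l B A) (mmul l C A)"
  by (simp add: mmul_def msub_def fun_eq_iff algebra_simps sum_subtractf)

lemma mmul_0_right: "mmul l A (\<lambda>_ _. 0) = (\<lambda>_ _. 0)"
  by (simp add: mmul_def fun_eq_iff)

lemma mmul_0_left: "mmul l (\<lambda>_ _. 0) A = (\<lambda>_ _. 0)"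
  by (simp add: mmul_def fun_eq_iff)

lemma madd_0_right: "madd A (\<lambda>_ _. 0) = A" by (simp add: madd_def)
lemma madd_0_left: "madd (\<lambda>_ _. 0) A = A" by (simp add: madd_def)

lemma hdeg_0: "hdeg d 0 \<delta>" by (simp add: hdeg_def)

lemma hdeg_diff:
  assumes d: "d > 0" and p: "hdeg d p \<delta>" and q: "hdeg d q \<delta>"
  shows "hdeg d (p - q) \<delta>"
proof (cases "p = 0 \<or> q = 0")
  case True
  then show ?thesis
  proof
    assume "p = 0"
    with q show ?thesis unfolding hdeg_def homog_def by auto
  next
    assume "q = 0"
    with p show ?thesis by simp
  qed
next
  case False
  then obtain n m where n: "homog n p" "2 * of_nat n / of_nat d = \<delta>"
    and m: "homog m q" "2 * of_nat m / of_nat d = \<delta>"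
    using p q unfolding hdeg_def by auto
  have "(2 * of_nat n :: complex) = 2 * of_nat m" using n(2) m(2) d by (simp add: divide_eq_eq)
  then have "n = m" by simp
  then have "homog n (p - q)" using n(1) m(1) unfolding homog_def by (metis coeff_diff diff_self)
  then show ?thesis using n(2) unfolding hdeg_def by auto
qed

lemma zero_ZMF: "(\<lambda>_ _. 0, \<lambda>_ _. 0) \<in> ZMF d M N"
  by (simp add: ZMF_def is_hmat_def hdeg_0 mmul_0_right mmul_0_left)

lemma HMF_single:
  assumes "\<And>f g. f \<in> ZMF d M N \<Longrightarrow> g \<in> ZMF d M N \<Longrightarrow>
             nullhtp d M N (msub (fst f) (fst g), msub (snd f) (snd g))"
  shows "\<exists>C. HMF d M N = {C}"
proof -
  have r: "{(f, g). f \<in> ZMF d M N \<and> g \<in> ZMF d M N \<and>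
      nullhtp d M N (msub (fst f) (fst g), msub (snd f) (snd g))} = ZMF d M N \<times> ZMF d M N"
    using assms by auto
  have "HMF d M N = {ZMF d M N}"
    unfolding HMF_def r quotient_def using zero_ZMF by auto
  then show ?thesis by blast
qed

lemma HMF_eq:
  assumes "\<And>f g. f \<in> ZMF d M N \<Longrightarrow> g \<in> ZMF d M N \<Longrightarrow>
             nullhtp d M N (msub (fst f) (fst g), msub (snd f) (snd g)) \<Longrightarrow> f = g"
  shows "HMF d M N = (\<lambda>f. {f}) ` ZMF d M N"
proof -
  have nh: "nullhtp d M N (msub (fst f) (fst f), msub (snd f) (snd f))" for f
    unfolding nullhtp_def
    by (rule exI[of _ "\<lambda>_ _. 0"], rule exI[of _ "\<lambda>_ _. 0"])
       (simp add: is_hmat_def hdeg_0 mmul_0_right mmul_0_left madd_def msub_def)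
  have r: "{(f, g). f \<in> ZMF d M N \<and> g \<in> ZMF d M N \<and>
      nullhtp d M N (msub (fst f) (fst g), msub (snd f) (snd g))} = {(f, g). f \<in> ZMF d M N \<and> f = g}"
    using assms nh by auto
  show ?thesis unfolding HMF_def r quotient_def by auto
qed

lemma caseA1:
  assumes d: "d > 0" and Z: "rk0 Z = 1" "rk1 Z = 1" "dd1 Z = E" "\<And>i j. deg1 Z i = deg0 Z j - 1"
  shows "\<exists>C. HMF d Z M = {C}"
proof (rule HMF_single)
  fix f g assume f: "f \<in> ZMF d Z M" and g: "g \<in> ZMF d Z M"
  obtain F0 F1 where fe: "f = (F0, F1)" by (cases f)
  obtain F0' F1' where ge: "g = (F0', F1')" by (cases g)
  have key: "is_hmat d 0 1 (deg0 Z) (rk0 M) (deg0 M) H0 \<and> is_hmat d 0 1 (deg1 Z) (rk1 M) (deg1 M) H1 \<and>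
     H0 = mmul (rk1 M) (dd1 M) H1" if "(H0, H1) \<in> ZMF d Z M" for H0 H1
  proof -
    have h0: "is_hmat d 0 1 (deg0 Z) (rk0 M) (deg0 M) H0" and h1: "is_hmat d 0 1 (deg1 Z) (rk1 M) (deg1 M) H1"
      and e: "mmul (rk1 M) (dd1 M) H1 = mmul 1 H0 E"
      using that Z by (auto simp: ZMF_def)
    have "H0 = mmul (rk1 M) (dd1 M) H1"
    proof (intro ext)
      fix i j
      show "H0 i j = mmul (rk1 M) (dd1 M) H1 i j"
        using fun_cong[OF fun_cong[OF e, of i], of j] h0
        by (cases "j = 0") (auto simp: mmul1 mmul1S E_def is_hmat_def)
    qed
    then show ?thesis using h0 h1 by blast
  qed
  note kf = key[of F0 F1, folded fe, OF f] and kg = key[of F0' F1', folded ge, OF g]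
  show "nullhtp d Z M (msub (fst f) (fst g), msub (snd f) (snd g))"
    unfolding nullhtp_def fe ge fst_conv snd_conv Z
  proof (intro exI conjI)
    show "is_hmat d (-1) 1 (deg0 Z) (rk1 M) (deg1 M) (msub F1 F1')"
      unfolding is_hmat_def
    proof (intro conjI allI impI)
      fix i j :: nat assume "rk1 M \<le> i \<or> 1 \<le> j"
      then show "msub F1 F1' i j = 0" using kf kg by (auto simp: is_hmat_def msub_def)
    next
      fix i j :: nat assume ij: "i < rk1 M" "j < 1"
      have a: "hdeg d (F1 i j) (deg0 Z j + - 1 - deg1 M i)" "hdeg d (F1' i j) (deg0 Z j + - 1 - deg1 M i)"
        using kf kg ij Z(4)[of j j] by (auto simp: is_hmat_def)
      show "hdeg d (msub F1 F1' i j) (deg0 Z j + - 1 - deg1 M i)"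
        unfolding msub_def by (rule hdeg_diff[OF d a])
    qed
    show "is_hmat d (-1) 1 (deg1 Z) (rk0 M) (deg0 M) (\<lambda>_ _. 0)"
      by (simp add: is_hmat_def hdeg_0)
    show "msub F0 F0' = madd (mmul (rk1 M) (dd1 M) (msub F1 F1')) (mmul 1 (\<lambda>_ _. 0) (dd0 Z))"
      using kf kg by (simp add: mmul_msub_right mmul_0_left madd_0_right)
    show "msub F1 F1' = madd (mmul (rk0 M) (dd0 M) (\<lambda>_ _. 0)) (mmul 1 (msub F1 F1') E)"
    proof (intro ext)
      fix i j
      show "msub F1 F1' i j = madd (mmul (rk0 M) (dd0 M) (\<lambda>_ _. 0)) (mmul 1 (msub F1 F1') E) i j"
        using kf kg by (cases "j = 0") (auto simp: mmul1 mmul1S mmul_0_right madd_0_left E_def is_hmat_def msub_def)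
    qed
  qed
qed

lemma caseA2:
  assumes d: "d > 0" and Z: "rk0 Z = 1" "rk1 Z = 1" "dd1 Z = E" "\<And>i j. deg1 Z i = deg0 Z j - 1"
  shows "\<exists>C. HMF d M Z = {C}"
proof (rule HMF_single)
  fix f g assume f: "f \<in> ZMF d M Z" and g: "g \<in> ZMF d M Z"
  obtain F0 F1 where fe: "f = (F0, F1)" by (cases f)
  obtain F0' F1' where ge: "g = (F0', F1')" by (cases g)
  have key: "is_hmat d 0 (rk0 M) (deg0 M) 1 (deg0 Z) H0 \<and> is_hmat d 0 (rk1 M) (deg1 M) 1 (deg1 Z) H1 \<and>
     H1 = mmul (rk0 M) H0 (dd1 M)" if "(H0, H1) \<in> ZMF d M Z" for H0 H1
  proof -
    have h0: "is_hmat d 0 (rk0 M) (deg0 M) 1 (deg0 Z) H0" and h1: "is_hmat d 0 (rk1 M) (deg1 M) 1 (deg1 Z) H1"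
      and e: "mmul 1 E H1 = mmul (rk0 M) H0 (dd1 M)"
      using that Z by (auto simp: ZMF_def)
    have "H1 = mmul (rk0 M) H0 (dd1 M)"
    proof (intro ext)
      fix i j
      show "H1 i j = mmul (rk0 M) H0 (dd1 M) i j"
        using fun_cong[OF fun_cong[OF e, of i], of j] h1
        by (cases "i = 0") (auto simp: mmul1 mmul1S E_def is_hmat_def)
    qed
    then show ?thesis using h0 h1 by blast
  qed
  note kf = key[of F0 F1, folded fe, OF f] and kg = key[of F0' F1', folded ge, OF g]
  show "nullhtp d M Z (msub (fst f) (fst g), msub (snd f) (snd g))"
    unfolding nullhtp_def fe ge fst_conv snd_conv Z
  proof (intro exI conjI)
    show "is_hmat d (-1) (rk0 M) (deg0 M) 1 (deg1 Z) (msub F0 F0')"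
      unfolding is_hmat_def
    proof (intro conjI allI impI)
      fix i j :: nat assume "1 \<le> i \<or> rk0 M \<le> j"
      then show "msub F0 F0' i j = 0" using kf kg by (auto simp: is_hmat_def msub_def)
    next
      fix i j :: nat assume ij: "i < 1" "j < rk0 M"
      have a: "hdeg d (F0 i j) (deg0 M j + - 1 - deg1 Z i)" "hdeg d (F0' i j) (deg0 M j + - 1 - deg1 Z i)"
        using kf kg ij Z(4)[of i i] by (auto simp: is_hmat_def)
      show "hdeg d (msub F0 F0' i j) (deg0 M j + - 1 - deg1 Z i)"
        unfolding msub_def by (rule hdeg_diff[OF d a])
    qed
    show "is_hmat d (-1) (rk1 M) (deg1 M) 1 (deg0 Z) (\<lambda>_ _. 0)"
      by (simp add: is_hmat_def hdeg_0)
    show "msub F0 F0' = madd (mmul 1 E (msub F0 F0')) (mmul (rk1 M) (\<lambda>_ _. 0) (dd0 M))"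
    proof (intro ext)
      fix i j
      show "msub F0 F0' i j = madd (mmul 1 E (msub F0 F0')) (mmul (rk1 M) (\<lambda>_ _. 0) (dd0 M)) i j"
        using kf kg by (cases "i = 0") (auto simp: mmul1 mmul1S mmul_0_left madd_0_right E_def is_hmat_def msub_def)
    qed
    show "msub F1 F1' = madd (mmul 1 (dd0 Z) (\<lambda>_ _. 0)) (mmul (rk0 M) (msub F0 F0') (dd1 M))"
      using kf kg by (simp add: mmul_msub_left mmul_0_right madd_0_left)
  qed
qed

lemma caseB1:
  assumes d: "d > 0" and Z: "rk0 Z = 1" "rk1 Z = 1" "dd0 Z = E" "\<And>i j. deg1 Z i = deg0 Z j + 1"
  shows "\<exists>C. HMF d Z M = {C}"
proof (rule HMF_single)
  fix f g assume f: "f \<in> ZMF d Z M" and g: "g \<in> ZMF d Z M"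
  obtain F0 F1 where fe: "f = (F0, F1)" by (cases f)
  obtain F0' F1' where ge: "g = (F0', F1')" by (cases g)
  have key: "is_hmat d 0 1 (deg0 Z) (rk0 M) (deg0 M) H0 \<and> is_hmat d 0 1 (deg1 Z) (rk1 M) (deg1 M) H1 \<and>
     H1 = mmul (rk0 M) (dd0 M) H0" if "(H0, H1) \<in> ZMF d Z M" for H0 H1
  proof -
    have h0: "is_hmat d 0 1 (deg0 Z) (rk0 M) (deg0 M) H0" and h1: "is_hmat d 0 1 (deg1 Z) (rk1 M) (deg1 M) H1"
      and e: "mmul (rk0 M) (dd0 M) H0 = mmul 1 H1 E"
      using that Z by (auto simp: ZMF_def)
    have "H1 = mmul (rk0 M) (dd0 M) H0"
    proof (intro ext)
      fix i j
      show "H1 i j = mmul (rk0 M) (dd0 M) H0 i j"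
        using fun_cong[OF fun_cong[OF e, of i], of j] h1
        by (cases "j = 0") (auto simp: mmul1 mmul1S E_def is_hmat_def)
    qed
    then show ?thesis using h0 h1 by blast
  qed
  note kf = key[of F0 F1, folded fe, OF f] and kg = key[of F0' F1', folded ge, OF g]
  show "nullhtp d Z M (msub (fst f) (fst g), msub (snd f) (snd g))"
    unfolding nullhtp_def fe ge fst_conv snd_conv Z
  proof (intro exI conjI)
    show "is_hmat d (-1) 1 (deg0 Z) (rk1 M) (deg1 M) (\<lambda>_ _. 0)"
      by (simp add: is_hmat_def hdeg_0)
    show "is_hmat d (-1) 1 (deg1 Z) (rk0 M) (deg0 M) (msub F0 F0')"
      unfolding is_hmat_def
    proof (intro conjI allI impI)
      fix i j :: nat assume "rk0 M \<le> i \<or> 1 \<le> j"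
      then show "msub F0 F0' i j = 0" using kf kg by (auto simp: is_hmat_def msub_def)
    next
      fix i j :: nat assume ij: "i < rk0 M" "j < 1"
      have a: "hdeg d (F0 i j) (deg1 Z j + - 1 - deg0 M i)" "hdeg d (F0' i j) (deg1 Z j + - 1 - deg0 M i)"
        using kf kg ij Z(4)[of j j] by (auto simp: is_hmat_def)
      show "hdeg d (msub F0 F0' i j) (deg1 Z j + - 1 - deg0 M i)"
        unfolding msub_def by (rule hdeg_diff[OF d a])
    qed
    show "msub F0 F0' = madd (mmul (rk1 M) (dd1 M) (\<lambda>_ _. 0)) (mmul 1 (msub F0 F0') E)"
    proof (intro ext)
      fix i j
      show "msub F0 F0' i j = madd (mmul (rk1 M) (dd1 M) (\<lambda>_ _. 0)) (mmul 1 (msub F0 F0') E) i j"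
        using kf kg by (cases "j = 0") (auto simp: mmul1 mmul1S mmul_0_right madd_0_left E_def is_hmat_def msub_def)
    qed
    show "msub F1 F1' = madd (mmul (rk0 M) (dd0 M) (msub F0 F0')) (mmul 1 (\<lambda>_ _. 0) (dd1 Z))"
      using kf kg by (simp add: mmul_msub_right mmul_0_left madd_0_right)
  qed
qed

lemma caseB2:
  assumes d: "d > 0" and Z: "rk0 Z = 1" "rk1 Z = 1" "dd0 Z = E" "\<And>i j. deg1 Z i = deg0 Z j + 1"
  shows "\<exists>C. HMF d M Z = {C}"
proof (rule HMF_single)
  fix f g assume f: "f \<in> ZMF d M Z" and g: "g \<in> ZMF d M Z"
  obtain F0 F1 where fe: "f = (F0, F1)" by (cases f)
  obtain F0' F1' where ge: "g = (F0', F1')" by (cases g)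
  have key: "is_hmat d 0 (rk0 M) (deg0 M) 1 (deg0 Z) H0 \<and> is_hmat d 0 (rk1 M) (deg1 M) 1 (deg1 Z) H1 \<and>
     H0 = mmul (rk1 M) H1 (dd0 M)" if "(H0, H1) \<in> ZMF d M Z" for H0 H1
  proof -
    have h0: "is_hmat d 0 (rk0 M) (deg0 M) 1 (deg0 Z) H0" and h1: "is_hmat d 0 (rk1 M) (deg1 M) 1 (deg1 Z) H1"
      and e: "mmul 1 E H0 = mmul (rk1 M) H1 (dd0 M)"
      using that Z by (auto simp: ZMF_def)
    have "H0 = mmul (rk1 M) H1 (dd0 M)"
    proof (intro ext)
      fix i j
      show "H0 i j = mmul (rk1 M) H1 (dd0 M) i j"
        using fun_cong[OF fun_cong[OF e, of i], of j] h0
        by (cases "i = 0") (auto simp: mmul1 mmul1S E_def is_hmat_def)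
    qed
    then show ?thesis using h0 h1 by blast
  qed
  note kf = key[of F0 F1, folded fe, OF f] and kg = key[of F0' F1', folded ge, OF g]
  show "nullhtp d M Z (msub (fst f) (fst g), msub (snd f) (snd g))"
    unfolding nullhtp_def fe ge fst_conv snd_conv Z
  proof (intro exI conjI)
    show "is_hmat d (-1) (rk0 M) (deg0 M) 1 (deg1 Z) (\<lambda>_ _. 0)"
      by (simp add: is_hmat_def hdeg_0)
    show "is_hmat d (-1) (rk1 M) (deg1 M) 1 (deg0 Z) (msub F1 F1')"
      unfolding is_hmat_def
    proof (intro conjI allI impI)
      fix i j :: nat assume "1 \<le> i \<or> rk1 M \<le> j"
      then show "msub F1 F1' i j = 0" using kf kg by (auto simp: is_hmat_def msub_def)
    next
      fix i j :: nat assume ij: "i < 1" "j < rk1 M"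
      have a: "hdeg d (F1 i j) (deg1 M j + - 1 - deg0 Z i)" "hdeg d (F1' i j) (deg1 M j + - 1 - deg0 Z i)"
        using kf kg ij Z(4)[of i i] by (auto simp: is_hmat_def diff_diff_eq add.commute)
      show "hdeg d (msub F1 F1' i j) (deg1 M j + - 1 - deg0 Z i)"
        unfolding msub_def by (rule hdeg_diff[OF d a])
    qed
    show "msub F0 F0' = madd (mmul 1 (dd1 Z) (\<lambda>_ _. 0)) (mmul (rk1 M) (msub F1 F1') (dd0 M))"
      using kf kg by (simp add: mmul_msub_left mmul_0_right madd_0_left)
    show "msub F1 F1' = madd (mmul 1 E (msub F1 F1')) (mmul (rk0 M) (\<lambda>_ _. 0) (dd1 M))"
    proof (intro ext)
      fix i j
      show "msub F1 F1' i j = madd (mmul 1 E (msub F1 F1')) (mmul (rk0 M) (\<lambda>_ _. 0) (dd1 M)) i j"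
        using kf kg by (cases "i = 0") (auto simp: mmul1 mmul1S mmul_0_left madd_0_right E_def is_hmat_def msub_def)
    qed
  qed
qed



lemma hdeg_none:
  assumes "hdeg d p \<delta>" "\<And>n. 2 * of_nat n / of_nat d \<noteq> \<delta>"
  shows "p = 0"
  using assms unfolding hdeg_def by auto

lemma G0_deg:
  assumes d: "d > 0" and rs: "r + s > 0"
  shows "2 * of_nat n / of_nat d \<noteq>
     (1 - of_nat r) / of_nat d + - 1 - ((1 - of_nat s) / of_nat d + 2 * of_nat s / of_nat d - 1 :: complex)"
proof
  assume "2 * of_nat n / of_nat d =
     (1 - of_nat r) / of_nat d + - 1 - ((1 - of_nat s) / of_nat d + 2 * of_nat s / of_nat d - 1 :: complex)"
  moreover have "(1 - of_nat r) / of_nat d + - 1 - ((1 - of_nat s) / of_nat d + 2 * of_nat s / of_nat d - 1 :: complex)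
     = (- (of_nat r + of_nat s)) / of_nat d" using d by (simp add: field_simps)
  ultimately have "(2 * of_nat n :: complex) = - (of_nat r + of_nat s)" using d
    by (simp add: divide_cancel_right)
  then have "complex_of_nat (2 * n + r + s) = 0" by (simp add: algebra_simps)
  then have "2 * n + r + s = 0" by (simp only: of_nat_eq_0_iff)
  with rs show False by simp
qed

lemma G1_deg:
  assumes d: "d > 0" and rs: "r < d" "s < d"
  shows "2 * of_nat n / of_nat d \<noteq>
     (1 - of_nat r) / of_nat d + 2 * of_nat r / of_nat d - 1 + - 1 - ((1 - of_nat s) / of_nat d :: complex)"
proof
  assume "2 * of_nat n / of_nat d =
     (1 - of_nat r) / of_nat d + 2 * of_nat r / of_nat d - 1 + - 1 - ((1 - of_nat s) / of_nat d :: complex)"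
  moreover have "(1 - of_nat r) / of_nat d + 2 * of_nat r / of_nat d - 1 + - 1 - ((1 - of_nat s) / of_nat d :: complex)
     = (of_nat r + of_nat s - 2 * of_nat d) / of_nat d" using d by (simp add: field_simps)
  ultimately have "(2 * of_nat n :: complex) = of_nat r + of_nat s - 2 * of_nat d" using d
    by (simp add: divide_cancel_right)
  then have "complex_of_nat (2 * n + 2 * d) = of_nat (r + s)" by (simp add: algebra_simps)
  then have "2 * n + 2 * d = r + s" by (simp only: of_nat_eq_iff)
  with rs show False by simp
qed



lemma xpow: "([:0, 1:] :: 'a::comm_ring_1 poly) ^ n = monom 1 n"
  by (simp add: monom_altdef)

lemma homog_w: assumes d: "d > 0" shows "homog d (bX ^ d - bY ^ d)"
  unfolding homog_def bX_def bY_def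
  using d by (auto simp: poly_const_pow xpow coeff_monom coeff_pCons split: nat.splits if_splits)

lemma homog_1: "homog 0 1"
  unfolding homog_def by (auto simp: coeff_1 split: if_splits)

lemma hdeg_w: "d > 0 \<Longrightarrow> hdeg d (bX ^ d - bY ^ d) 2"
  unfolding hdeg_def using homog_w by (intro disjI2 exI[of _ d]) auto

lemma hdeg_1: "hdeg d 1 0"
  unfolding hdeg_def using homog_1 by (auto intro!: exI[of _ 0])



theorem lemma3p13:
  fixes d :: nat
  assumes "d \<ge> 2"
  shows "is_zero_obj d (Phat d {}) \<and> is_zero_obj d (Phat d {..<d}) \<and>
    (\<forall>R S. R \<noteq> {} \<and> R \<subset> {..<d} \<and> S \<noteq> {} \<and> S \<subset> {..<d} \<longrightarrow>
       HMF d (Phat d R) (Phat d S) = (\<lambda>f. {f}) ` ZMF d (Phat d R) (Phat d S))"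
proof (intro conjI allI impI)
  have d: "d > 0" using assms by simp
  note w = bprod[OF d]
  have gmf1: "is_gmf d (Phat d {})"
    unfolding is_gmf_def is_hmat_def
    using d w hdeg_w[OF d] hdeg_1 by (auto simp: Phat_def P_def mmul1 mmul1S sid_def fun_eq_iff)
  show "is_zero_obj d (Phat d {})"
    unfolding is_zero_obj_def
  proof (intro conjI allI impI gmf1)
    fix M
    have Z: "rk0 (Phat d {}) = 1" "rk1 (Phat d {}) = 1" "dd1 (Phat d {}) = E"
      "\<And>i j. deg1 (Phat d {}) i = deg0 (Phat d {}) j - 1"
      by (auto simp: Phat_def P_def E_def fun_eq_iff)
    show "\<exists>C. HMF d (Phat d {}) M = {C}" by (rule caseA1[OF d Z])
    show "\<exists>C. HMF d M (Phat d {}) = {C}" by (rule caseA2[OF d Z])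
  qed
  have gmf2: "is_gmf d (Phat d {..<d})"
    unfolding is_gmf_def is_hmat_def
    using d w hdeg_w[OF d] hdeg_1 by (auto simp: Phat_def P_def mmul1 mmul1S sid_def fun_eq_iff)
  show "is_zero_obj d (Phat d {..<d})"
    unfolding is_zero_obj_def
  proof (intro conjI allI impI gmf2)
    fix M
    have Z: "rk0 (Phat d {..<d}) = 1" "rk1 (Phat d {..<d}) = 1" "dd0 (Phat d {..<d}) = E"
      "\<And>i j. deg1 (Phat d {..<d}) i = deg0 (Phat d {..<d}) j + 1"
      using d by (auto simp: Phat_def P_def E_def fun_eq_iff)
    show "\<exists>C. HMF d (Phat d {..<d}) M = {C}" by (rule caseB1[OF d Z])
    show "\<exists>C. HMF d M (Phat d {..<d}) = {C}" by (rule caseB2[OF d Z])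
  qed
  fix R S assume RS: "R \<noteq> {} \<and> R \<subset> {..<d} \<and> S \<noteq> {} \<and> S \<subset> {..<d}"
  have cR: "card R < d" "card R > 0" using RS psubset_card_mono[of "{..<d}" R] finite_subset[of R "{..<d}"]
    by (auto simp: card_gt_0_iff)
  have cS: "card S < d" "card S > 0" using RS psubset_card_mono[of "{..<d}" S] finite_subset[of S "{..<d}"]
    by (auto simp: card_gt_0_iff)
  show "HMF d (Phat d R) (Phat d S) = (\<lambda>f. {f}) ` ZMF d (Phat d R) (Phat d S)"
  proof (rule HMF_eq)
    fix f g assume f: "f \<in> ZMF d (Phat d R) (Phat d S)" and g: "g \<in> ZMF d (Phat d R) (Phat d S)"
      and nh: "nullhtp d (Phat d R) (Phat d S) (msub (fst f) (fst g), msub (snd f) (snd g))"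
    obtain G0 G1 where
      G0: "is_hmat d (-1) 1 (\<lambda>_. (1 - of_nat (card R)) / of_nat d) 1
            (\<lambda>_. (1 - of_nat (card S)) / of_nat d + 2 * of_nat (card S) / of_nat d - 1) G0" and
      G1: "is_hmat d (-1) 1 (\<lambda>_. (1 - of_nat (card R)) / of_nat d + 2 * of_nat (card R) / of_nat d - 1) 1
            (\<lambda>_. (1 - of_nat (card S)) / of_nat d) G1" and
      e0: "msub (fst f) (fst g) = madd (mmul 1 (dd1 (Phat d S)) G0) (mmul 1 G1 (dd0 (Phat d R)))" and
      e1: "msub (snd f) (snd g) = madd (mmul 1 (dd0 (Phat d S)) G1) (mmul 1 G0 (dd1 (Phat d R)))"
      using nh unfolding nullhtp_def by (auto simp: Phat_def P_def)
    have "hdeg d (G0 0 0) ((1 - of_nat (card R)) / of_nat d + - 1 - ((1 - of_nat (card S)) / of_nat d + 2 * of_nat (card S) / of_nat d - 1))"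
      using G0 unfolding is_hmat_def by auto
    moreover have "card R + card S > 0" using cR by simp
    ultimately have "G0 0 0 = 0" by (rule hdeg_none[OF _ G0_deg[OF d]])
    then have G0z: "G0 = (\<lambda>_ _. 0)"
    proof (intro ext)
      fix i j :: nat assume z: "G0 0 0 = 0"
      show "G0 i j = 0"
      proof (cases "i = 0 \<and> j = 0")
        case True with z show ?thesis by simp
      next
        case False then have "1 \<le> i \<or> 1 \<le> j" by auto
        with G0 show ?thesis unfolding is_hmat_def by blast
      qed
    qed
    have "hdeg d (G1 0 0) ((1 - of_nat (card R)) / of_nat d + 2 * of_nat (card R) / of_nat d - 1 + - 1 - ((1 - of_nat (card S)) / of_nat d))"
      using G1 unfolding is_hmat_def by auto
    then have "G1 0 0 = 0" by (rule hdeg_none[OF _ G1_deg[OF d cR(1) cS(1)]])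
    then have G1z: "G1 = (\<lambda>_ _. 0)"
    proof (intro ext)
      fix i j :: nat assume z: "G1 0 0 = 0"
      show "G1 i j = 0"
      proof (cases "i = 0 \<and> j = 0")
        case True with z show ?thesis by simp
      next
        case False then have "1 \<le> i \<or> 1 \<le> j" by auto
        with G1 show ?thesis unfolding is_hmat_def by blast
      qed
    qed
    have "msub (fst f) (fst g) = (\<lambda>_ _. 0)" "msub (snd f) (snd g) = (\<lambda>_ _. 0)"
      using e0 e1 by (simp_all add: G0z G1z mmul_0_left mmul_0_right madd_def)
    then have "fst f = fst g" "snd f = snd g" by (auto simp: msub_def fun_eq_iff)
    then show "f = g" by (simp add: prod_eq_iff)
  qed
qed


end
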